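(* Consider the protocol with state set $Q=\{L_1,L_2,N\}$ and (symmetric, deterministic) rules $L_1L_2\to L_1N$, $L_2L_1\to NL_1$, $L_1N\to NL_2$, $NL_1\to L_2N$, $L_2N\to NL_1$, $NL_2\to L_1N$, $NN\to NN$, $L_1L_1\to L_2L_2$, $L_2L_2\to L_1L_1$. This protocol is Pavlovian (it is the protocol associated to the payoff matrix with rows (player) and columns (opponent) ordered $L_1,L_2,N$: row $L_1$: $(-3,0,-3)$; row $L_2$: $(-1,-3,-3)$; row $N$: $(-2,-3,0)$), and it solves the leader election problem for populations of size at least $3$: for every $n\ge 3$, every configuration $C_0$ of $n$ agents containing at least one agent in state $L_1$ or $L_2$, and every fair execution starting from $C_0$, there is a time after which every configuration contains exactly one agent in a state of $\{L_1,L_2\}$.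
   Context: A population protocol has a finite state set $Q$ and a transition relation $\delta\subseteq Q^4$; we write $q_1q_2\to q_1'q_2'$ for $(q_1,q_2,q_1',q_2')\in\delta$. A configuration of $n\ge2$ agents is a multiset of $n$ elements of $Q$. We write $C\to C'$ if $C'$ is obtained from $C$ by choosing two of its elements (two distinct agents) in states $q_1,q_2$ and replacing them by $q_1',q_2'$ for some $(q_1,q_2,q_1',q_2')\in\delta$. An execution from $C_0$ is an infinite sequence $C_0,C_1,\dots$ with $C_i\to C_{i+1}$ for all $i$. It is fair if for every configuration $C$ occurring infinitely often and every $C'$ with $C\to C'$, $C'$ also occurs infinitely often. A symmetric game on $Q$ is a real matrix $M=(M_{q,r})_{q,r\in Q}$ ($M_{q,r}$ = payoff of playing $q$ against $r$). For $q',y\in Q$, $BR_{\neq q'}(y)$ is the set of $x\in Q\setminus\{q'\}$ with $M_{z,y}\le M_{x,y}$ for all $z\in Q\setminus\{q'\}$. The transition relation associated to $M$ consists of exactly those $(q_1,q_2,q_1',q_2')$ with: $q_1'=q_1$ if $M_{q_1,q_2}\ge0$, $q_1'\in BR_{\neq q_1}(q_2)$ if $M_{q_1,q_2}<0$; $q_2'=q_2$ if $M_{q_2,q_1}\ge0$, $q_2'\in BR_{\neq q_2}(q_1)$ if $M_{q_2,q_1}<0$. A population protocol is Pavlovian if $\delta$ equals the transition relation associated to some real matrix indexed by $Q\times Q$. *)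

theory Defs
  imports Complex_Main "HOL-Library.Multiset"
begin

text \<open>Generic population protocols over a state type 'q (the state set Q is UNIV).
  A transition relation is a set of quadruples (q1,q2,q1',q2').\<close>

type_synonym 'q trans = "('q \<times> 'q \<times> 'q \<times> 'q) set"

definition step :: "'q trans \<Rightarrow> 'q multiset \<Rightarrow> 'q multiset \<Rightarrow> bool" where
  "step \<delta> C C' \<longleftrightarrow> (\<exists>q1 q2 q1' q2'. (q1, q2, q1', q2') \<in> \<delta> \<and>
       {#q1, q2#} \<subseteq># C \<and> C' = C - {#q1, q2#} + {#q1', q2'#})"

definition execution :: "'q trans \<Rightarrow> (nat \<Rightarrow> 'q multiset) \<Rightarrow> bool" where
  "execution \<delta> E \<longleftrightarrow> (\<forall>i. step \<delta> (E i) (E (Suc i)))"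

definition fair :: "'q trans \<Rightarrow> (nat \<Rightarrow> 'q multiset) \<Rightarrow> bool" where
  "fair \<delta> E \<longleftrightarrow> (\<forall>C. (\<exists>\<^sub>\<infinity> i. E i = C) \<longrightarrow>
       (\<forall>C'. step \<delta> C C' \<longrightarrow> (\<exists>\<^sub>\<infinity> i. E i = C')))"

text \<open>Symmetric games: M q r is the payoff of playing q against r.\<close>

definition BR_ne :: "('q \<Rightarrow> 'q \<Rightarrow> real) \<Rightarrow> 'q \<Rightarrow> 'q \<Rightarrow> 'q set" where
  "BR_ne M q' y = {x. x \<noteq> q' \<and> (\<forall>z. z \<noteq> q' \<longrightarrow> M z y \<le> M x y)}"

definition game_trans :: "('q \<Rightarrow> 'q \<Rightarrow> real) \<Rightarrow> 'q trans" where
  "game_trans M = {(q1, q2, q1', q2').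
      (if M q1 q2 \<ge> 0 then q1' = q1 else q1' \<in> BR_ne M q1 q2) \<and>
      (if M q2 q1 \<ge> 0 then q2' = q2 else q2' \<in> BR_ne M q2 q1)}"

definition pavlovian :: "'q trans \<Rightarrow> bool" where
  "pavlovian \<delta> \<longleftrightarrow> (\<exists>M. \<delta> = game_trans M)"

datatype st = L1 | L2 | N

definition delta5 :: "st trans" where
  "delta5 = {(L1, L2, L1, N), (L2, L1, N, L1), (L1, N, N, L2), (N, L1, L2, N),
             (L2, N, N, L1), (N, L2, L1, N), (N, N, N, N), (L1, L1, L2, L2),
             (L2, L2, L1, L1)}"

fun M5 :: "st \<Rightarrow> st \<Rightarrow> real" where
  "M5 L1 L1 = -3" | "M5 L1 L2 = 0" | "M5 L1 N = -3"
| "M5 L2 L1 = -1" | "M5 L2 L2 = -3" | "M5 L2 N = -3"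
| "M5 N L1 = -2" | "M5 N L2 = -3" | "M5 N N = 0"

definition leaders :: "st multiset \<Rightarrow> nat" where
  "leaders C = count C L1 + count C L2"

end

theory Submission
  imports Defs "HOL-Library.Infinite_Set"
begin

lemma univ_st: "(UNIV :: st set) = {L1, L2, N}"
  using st.exhaust by auto

lemma all_st: "(\<forall>z. P z) \<longleftrightarrow> P L1 \<and> P L2 \<and> P N"
  by (metis st.exhaust)
lemma ex_st: "(\<exists>z. P z) \<longleftrightarrow> P L1 \<or> P L2 \<or> P N"
  by (metis st.exhaust)
lemma BR: "x \<in> BR_ne M5 q y \<longleftrightarrow> x \<noteq> q \<and> (\<forall>z\<in>{L1,L2,N}. z \<noteq> q \<longrightarrow> M5 z y \<le> M5 x y)"
  unfolding BR_ne_def by (simp add: all_st)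
lemma part1: "delta5 = game_trans M5"
proof (rule set_eqI)
  fix x :: "st \<times> st \<times> st \<times> st"
  obtain a b c d where x: "x = (a,b,c,d)" by (cases x) auto
  show "x \<in> delta5 \<longleftrightarrow> x \<in> game_trans M5"
    unfolding x delta5_def game_trans_def BR
    by (cases a; cases b; cases c; cases d; simp)
qed

lemma step_size: "step delta5 C C' \<Longrightarrow> size C' = size C"
  proof -
  assume "step delta5 C C'"
  then obtain q1 q2 q1' q2' where h: "{#q1, q2#} \<subseteq># C" "C' = C - {#q1, q2#} + {#q1', q2'#}"
    unfolding step_def by blast
  have "size {#q1, q2#} \<le> size C" using size_mset_mono[OF h(1)] .
  then show ?thesis using h by (simp add: size_Diff_submset)
qed

lemma step_leaders: "step delta5 C C' \<Longrightarrow> leaders C' \<le> leaders C \<and> (leaders C \<ge> 1 \<longrightarrow> leaders C' \<ge> 1)"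
  unfolding step_def delta5_def leaders_def
  by (auto simp: subseteq_mset_def split: if_splits)

lemma step_intro:
  "(q1,q2,q1',q2') \<in> delta5 \<Longrightarrow> {#q1,q2#} \<subseteq># C \<Longrightarrow> step delta5 C (C - {#q1,q2#} + {#q1',q2'#})"
  unfolding step_def by blast

lemma sub2: "a \<noteq> b \<Longrightarrow> count C a \<ge> 1 \<Longrightarrow> count C b \<ge> 1 \<Longrightarrow> {#a,b#} \<subseteq># C"
  unfolding subseteq_mset_def by (simp add: Suc_le_eq) blast

lemma sub1: "count C a \<ge> 2 \<Longrightarrow> {#a,a#} \<subseteq># C"
  unfolding subseteq_mset_def by simp

lemma szl: "size (C::st multiset) = count C L1 + count C L2 + count C N"
proof (induction C)
  case empty then show ?case by simp
next
  case (add x C) then show ?case by (cases x) simp_all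
qed

lemma key:
  assumes "leaders C \<ge> 2" "size C \<ge> 3"
  shows "\<exists>C'. step delta5 C C' \<and> (leaders C' < leaders C \<or>
           (\<exists>C''. step delta5 C' C'' \<and> leaders C'' < leaders C))"
proof -
  have sz: "size C = count C L1 + count C L2 + count C N" by (rule szl)
  have mix: "step delta5 D (D - {#L1, L2#} + {#L1, N#}) \<and> leaders (D - {#L1, L2#} + {#L1, N#}) < leaders D"
    if "count D L1 \<ge> 1" "count D L2 \<ge> 1" for D
  proof
    show "step delta5 D (D - {#L1, L2#} + {#L1, N#})"
      apply (rule step_intro[OF _ sub2]) apply (simp add: delta5_def) apply simp using that by linarith+
    show "leaders (D - {#L1, L2#} + {#L1, N#}) < leaders D"
      using that by (simp add: leaders_def)
  qed
  show ?thesis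
  proof (cases "count C L1 \<ge> 1 \<and> count C L2 \<ge> 1")
    case True then show ?thesis using mix[of C] by blast
  next
    case nmix: False
    show ?thesis
    proof (cases "count C L2 = 0")
      case c2: True
      then have l1: "count C L1 \<ge> 2" using assms(1) by (simp add: leaders_def)
      show ?thesis
      proof (cases "count C N \<ge> 1")
        case True
        let ?C = "C - {#L1, N#} + {#N, L2#}"
        have s: "step delta5 C ?C"
          apply (rule step_intro[OF _ sub2]) apply (simp add: delta5_def) apply simp using l1 True by linarith+
        have e1: "count ?C L1 = count C L1 - 1" and e2: "count ?C L2 = count C L2 + 1" by simp_all
        have cnt: "count ?C L1 \<ge> 1" "count ?C L2 \<ge> 1" unfolding e1 e2 using l1 True c2 by linarith+
        have lq: "leaders ?C = leaders C" unfolding leaders_def e1 e2 using l1 by linarith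
        have m: "step delta5 ?C (?C - {#L1, L2#} + {#L1, N#}) \<and> leaders (?C - {#L1, L2#} + {#L1, N#}) < leaders ?C" by (rule mix[OF cnt])
        show ?thesis
        proof (intro exI conjI disjI2)
          show "step delta5 C ?C" by (rule s)
          show "step delta5 ?C (?C - {#L1, L2#} + {#L1, N#})" using m by (rule conjunct1)
          show "leaders (?C - {#L1, L2#} + {#L1, N#}) < leaders C" using m lq by linarith
        qed
      next
        case False
        have l3: "count C L1 \<ge> 3" using False sz c2 assms(2) by linarith
        let ?C = "C - {#L1, L1#} + {#L2, L2#}"
        have s: "step delta5 C ?C"
          apply (rule step_intro[OF _ sub1]) apply (simp add: delta5_def) using l3 by linarith
        have e1: "count ?C L1 = count C L1 - 2" and e2: "count ?C L2 = count C L2 + 2" by simp_all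
        have cnt: "count ?C L1 \<ge> 1" "count ?C L2 \<ge> 1" unfolding e1 e2 using l3 c2 by linarith+
        have lq: "leaders ?C = leaders C" unfolding leaders_def e1 e2 using l3 by linarith
        have m: "step delta5 ?C (?C - {#L1, L2#} + {#L1, N#}) \<and> leaders (?C - {#L1, L2#} + {#L1, N#}) < leaders ?C" by (rule mix[OF cnt])
        show ?thesis
        proof (intro exI conjI disjI2)
          show "step delta5 C ?C" by (rule s)
          show "step delta5 ?C (?C - {#L1, L2#} + {#L1, N#})" using m by (rule conjunct1)
          show "leaders (?C - {#L1, L2#} + {#L1, N#}) < leaders C" using m lq by linarith
        qed
      qed
    next
      case c2: False
      have c1: "count C L1 = 0" using nmix c2 by presburger
      then have l2: "count C L2 \<ge> 2" using assms(1) by (simp add: leaders_def)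
      show ?thesis
      proof (cases "count C N \<ge> 1")
        case True
        let ?C = "C - {#L2, N#} + {#N, L1#}"
        have s: "step delta5 C ?C"
          apply (rule step_intro[OF _ sub2]) apply (simp add: delta5_def) apply simp using l2 True by linarith+
        have e1: "count ?C L1 = count C L1 + 1" and e2: "count ?C L2 = count C L2 - 1" by simp_all
        have cnt: "count ?C L1 \<ge> 1" "count ?C L2 \<ge> 1" unfolding e1 e2 using l2 True c1 by linarith+
        have lq: "leaders ?C = leaders C" unfolding leaders_def e1 e2 using l2 by linarith
        have m: "step delta5 ?C (?C - {#L1, L2#} + {#L1, N#}) \<and> leaders (?C - {#L1, L2#} + {#L1, N#}) < leaders ?C" by (rule mix[OF cnt])
        show ?thesis
        proof (intro exI conjI disjI2)
          show "step delta5 C ?C" by (rule s)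
          show "step delta5 ?C (?C - {#L1, L2#} + {#L1, N#})" using m by (rule conjunct1)
          show "leaders (?C - {#L1, L2#} + {#L1, N#}) < leaders C" using m lq by linarith
        qed
      next
        case False
        have l3: "count C L2 \<ge> 3" using False sz c1 assms(2) by linarith
        let ?C = "C - {#L2, L2#} + {#L1, L1#}"
        have s: "step delta5 C ?C"
          apply (rule step_intro[OF _ sub1]) apply (simp add: delta5_def) using l3 by linarith
        have e1: "count ?C L1 = count C L1 + 2" and e2: "count ?C L2 = count C L2 - 2" by simp_all
        have cnt: "count ?C L1 \<ge> 1" "count ?C L2 \<ge> 1" unfolding e1 e2 using l3 c1 by linarith+
        have lq: "leaders ?C = leaders C" unfolding leaders_def e1 e2 using l3 by linarith
        have m: "step delta5 ?C (?C - {#L1, L2#} + {#L1, N#}) \<and> leaders (?C - {#L1, L2#} + {#L1, N#}) < leaders ?C" by (rule mix[OF cnt])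
        show ?thesis
        proof (intro exI conjI disjI2)
          show "step delta5 C ?C" by (rule s)
          show "step delta5 ?C (?C - {#L1, L2#} + {#L1, N#})" using m by (rule conjunct1)
          show "leaders (?C - {#L1, L2#} + {#L1, N#}) < leaders C" using m lq by linarith
        qed
      qed
    qed
  qed
qed

lemma part3:
  assumes sz: "size (E 0) \<ge> 3" and l0: "leaders (E 0) \<ge> 1"
    and ex: "execution delta5 E" and fa: "fair delta5 E"
  shows "\<exists>T. \<forall>t\<ge>T. leaders (E t) = 1"
proof -
  have st: "step delta5 (E i) (E (Suc i))" for i using ex by (simp add: execution_def)
  have size_eq: "size (E i) = size (E 0)" for i
    by (induction i) (auto simp: step_size[OF st])
  have lge: "leaders (E i) \<ge> 1" for i
    by (induction i) (use st step_leaders l0 in auto)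
  have mono: "leaders (E j) \<le> leaders (E i)" if "i \<le> j" for i j
    using that
  proof (induction j)
    case 0 then show ?case by simp
  next
    case (Suc j)
    then show ?case using step_leaders[OF st[of j]] by (cases "i = Suc j") auto
  qed
  obtain T where T: "\<forall>t. leaders (E T) \<le> leaders (E t)"
    using ex_has_least_nat[of "\<lambda>_. True" 0 "\<lambda>t. leaders (E t)"] by auto
  have const: "leaders (E t) = leaders (E T)" if "t \<ge> T" for t
    using mono[OF that] T le_antisym by blast
  have fair2: "\<exists>\<^sub>\<infinity> i. E i = C'" if "\<exists>\<^sub>\<infinity> i. E i = C" "step delta5 C C'" for C C'
    using fa that unfolding fair_def by blast
  have "leaders (E T) = 1"
  proof (rule ccontr)
    assume "leaders (E T) \<noteq> 1"
    then have k2: "leaders (E T) \<ge> 2" using lge[of T] by simp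
    define S where "S = multisets_of_size (UNIV :: st set) (size (E 0))"
    have finS: "finite S" unfolding S_def
      by (rule finite_multisets_of_size) (simp add: univ_st)
    have inS: "E i \<in> S" for i using size_eq by (simp add: S_def multisets_of_size_def)
    have inf1: "\<exists>\<^sub>\<infinity> i. \<exists>C\<in>S. E i = C" using inS by (simp add: INFM_nat_le)
    have "\<exists>C\<in>S. \<exists>\<^sub>\<infinity> i. E i = C"
      by (rule iffD1[OF INFM_finite_Bex_distrib[OF finS]]) (rule inf1)
    then obtain C where C: "\<exists>\<^sub>\<infinity> i. E i = C" by blast
    have "\<exists>n\<ge>T. E n = C" using C unfolding INFM_nat_le by (rule spec)
    then obtain i where i: "i \<ge> T" "E i = C" by (elim exE conjE)
    have lC: "leaders C = leaders (E T)" using const[OF i(1)] i(2) by simp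
    have "size C \<ge> 3" using i size_eq sz by metis
    then obtain C' where s1: "step delta5 C C'" and
      dj: "leaders C' < leaders C \<or> (\<exists>C''. step delta5 C' C'' \<and> leaders C'' < leaders C)"
      using key[of C] k2 lC by auto
    have C': "\<exists>\<^sub>\<infinity> i. E i = C'" by (rule fair2[OF C s1])
    obtain D where D: "\<exists>\<^sub>\<infinity> i. E i = D" "leaders D < leaders (E T)"
    proof (cases "leaders C' < leaders C")
      case True then show ?thesis using that C' lC by simp
    next
      case False
      then obtain C'' where s2: "step delta5 C' C''" "leaders C'' < leaders C" using dj by blast
      show ?thesis using that fair2[OF C' s2(1)] s2(2) lC by simp
    qed
    have "\<exists>n\<ge>T. E n = D" using D(1) unfolding INFM_nat_le by (rule spec)
    then obtain j where j: "j \<ge> T" "E j = D" by (elim exE conjE)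
    then show False using const[OF j(1)] j(2) D(2) by simp
  qed
  then have lT: "leaders (E T) = 1" .
  show ?thesis
  proof (intro exI allI impI)
    fix t assume tT: "T \<le> t"
    show "leaders (E t) = 1" using const[OF tT] lT by simp
  qed
qed

theorem mainTheorem5:
  shows "delta5 = game_trans M5 \<and> pavlovian delta5 \<and>
    (\<forall>E. size (E 0) \<ge> 3 \<longrightarrow> leaders (E 0) \<ge> 1 \<longrightarrow>
         execution delta5 E \<longrightarrow> fair delta5 E \<longrightarrow>
         (\<exists>T. \<forall>t\<ge>T. leaders (E t) = 1))"
  using part1 part3 unfolding pavlovian_def by blast

end
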